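(* Let $\kappa$ be an uncountable regular cardinal and let $\mathcal{I}$ be a $\kappa$-complete proper ideal on $\kappa$ containing every bounded subset of $\kappa$. Then $\mathcal{I}$ has the approximation property if and only if there is a partition $\{C_\alpha:\alpha<\kappa\}$ of $\kappa$ such that, setting $D_\alpha=\bigcup_{\beta\le\alpha}C_\beta$, the family $\{D_\alpha:\alpha<\kappa\}$ is a basis for $\mathcal{I}$.
   Context: A basis for $\mathcal{I}$ is a family $\mathcal{B}\subseteq\mathcal{I}$ such that every $D\in\mathcal{I}$ is contained in some member of $\mathcal{B}$. $\mathcal{I}$ has the approximation property if there is a sequence $\langle B_\alpha:\alpha<\kappa\rangle$ of members of $\mathcal{I}$ which is strictly increasing ($B_\alpha\subsetneq B_\beta$ for $\alpha<\beta$) and continuous ($B_\alpha=\bigcup_{\beta<\alpha}B_\beta$ for limit $\alpha$), with $B_0=\emptyset$, and such that for every $B\in\mathcal{I}$ there is $\alpha<\kappa$ with $B\subsetneq B_\alpha$. *)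

theory Defs
  imports Main "HOL-Library.Countable_Set"
begin

unbundle cardinal_syntax

text \<open>A cardinal kappa is represented by a cardinal order r (an initial ordinal,
  Card_order r); the elements of kappa (the ordinals below kappa) are Field r,
  ordered by r.\<close>

definition ord_less :: "'a rel \<Rightarrow> 'a \<Rightarrow> 'a \<Rightarrow> bool" where
  "ord_less r a b \<longleftrightarrow> (a, b) \<in> r \<and> a \<noteq> b"

definition is_limit :: "'a rel \<Rightarrow> 'a \<Rightarrow> bool" where
  "is_limit r a \<longleftrightarrow> a \<in> Field r \<and> (\<exists>b. ord_less r b a)
     \<and> (\<forall>b. ord_less r b a \<longrightarrow> (\<exists>c. ord_less r b c \<and> ord_less r c a))"

definition is_ideal_on :: "'a rel \<Rightarrow> 'a set set \<Rightarrow> bool" where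
  "is_ideal_on r I \<longleftrightarrow> I \<subseteq> Pow (Field r) \<and> {} \<in> I
     \<and> (\<forall>A\<in>I. \<forall>B. B \<subseteq> A \<longrightarrow> B \<in> I)
     \<and> (\<forall>A\<in>I. \<forall>B\<in>I. A \<union> B \<in> I)"

definition proper_ideal_on :: "'a rel \<Rightarrow> 'a set set \<Rightarrow> bool" where
  "proper_ideal_on r I \<longleftrightarrow> is_ideal_on r I \<and> Field r \<notin> I"

definition kappa_complete :: "'a rel \<Rightarrow> 'a set set \<Rightarrow> bool" where
  "kappa_complete r I \<longleftrightarrow> (\<forall>F. F \<subseteq> I \<and> |F| <o r \<longrightarrow> \<Union>F \<in> I)"

definition bounded_subset :: "'a rel \<Rightarrow> 'a set \<Rightarrow> bool" where
  "bounded_subset r B \<longleftrightarrow> B \<subseteq> Field r \<and> (\<exists>a\<in>Field r. \<forall>b\<in>B. ord_less r b a)"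

definition is_basis :: "'a set set \<Rightarrow> 'a set set \<Rightarrow> bool" where
  "is_basis I Bs \<longleftrightarrow> Bs \<subseteq> I \<and> (\<forall>D\<in>I. \<exists>B\<in>Bs. D \<subseteq> B)"

definition approximation_property :: "'a rel \<Rightarrow> 'a set set \<Rightarrow> bool" where
  "approximation_property r I \<longleftrightarrow> (\<exists>B :: 'a \<Rightarrow> 'a set.
      (\<forall>a\<in>Field r. B a \<in> I)
    \<and> (\<forall>a\<in>Field r. \<forall>b\<in>Field r. ord_less r a b \<longrightarrow> B a \<subset> B b)
    \<and> (\<forall>a. is_limit r a \<longrightarrow> B a = (\<Union>b\<in>{b. ord_less r b a}. B b))
    \<and> (\<forall>a\<in>Field r. (\<forall>b\<in>Field r. (a, b) \<in> r) \<longrightarrow> B a = {})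
    \<and> (\<forall>X\<in>I. \<exists>a\<in>Field r. X \<subset> B a))"

definition is_partition_of :: "'a rel \<Rightarrow> ('a \<Rightarrow> 'a set) \<Rightarrow> bool" where
  "is_partition_of r C \<longleftrightarrow> (\<forall>a\<in>Field r. C a \<noteq> {} \<and> C a \<subseteq> Field r)
     \<and> (\<forall>a\<in>Field r. \<forall>b\<in>Field r. a \<noteq> b \<longrightarrow> C a \<inter> C b = {})
     \<and> (\<Union>a\<in>Field r. C a) = Field r"

end

theory Submission
  imports Defs
begin

lemma wo_basic:
  assumes "Well_order r"
  shows wo_trans: "\<And>a b c. (a,b)\<in>r \<Longrightarrow> (b,c)\<in>r \<Longrightarrow> (a,c)\<in>r"
    and wo_antisym: "\<And>a b. (a,b)\<in>r \<Longrightarrow> (b,a)\<in>r \<Longrightarrow> a=b"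
    and wo_total: "\<And>a b. a\<in>Field r \<Longrightarrow> b\<in>Field r \<Longrightarrow> (a,b)\<in>r \<or> (b,a)\<in>r"
    and wo_least: "\<And>S x. S \<subseteq> Field r \<Longrightarrow> x\<in>S \<Longrightarrow> \<exists>m\<in>S. \<forall>y\<in>S. (m,y)\<in>r"
proof -
  have w: "wo_rel r" using assms by (simp add: wo_rel_def)
  show "\<And>a b c. (a,b)\<in>r \<Longrightarrow> (b,c)\<in>r \<Longrightarrow> (a,c)\<in>r"
    using wo_rel.TRANS[OF w] unfolding trans_def by blast
  show "\<And>a b. (a,b)\<in>r \<Longrightarrow> (b,a)\<in>r \<Longrightarrow> a=b"
    using wo_rel.ANTISYM[OF w] unfolding antisym_def by blast
  show "\<And>a b. a\<in>Field r \<Longrightarrow> b\<in>Field r \<Longrightarrow> (a,b)\<in>r \<or> (b,a)\<in>r"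
    using wo_rel.TOTALS[OF w] by blast
  show "\<And>S x. S \<subseteq> Field r \<Longrightarrow> x\<in>S \<Longrightarrow> \<exists>m\<in>S. \<forall>y\<in>S. (m,y)\<in>r"
  proof -
    fix S x assume S: "S \<subseteq> Field r" and x: "x \<in> S"
    have "S \<noteq> {}" using x by blast
    then have "wo_rel.minim r S \<in> S" using wo_rel.minim_in[OF w S] by simp
    moreover have "\<forall>y\<in>S. (wo_rel.minim r S, y) \<in> r" using wo_rel.minim_least[OF w S] by simp
    ultimately show "\<exists>m\<in>S. \<forall>y\<in>S. (m,y)\<in>r" by blast
  qed
qed

lemma lt_le_trans:
  assumes wo: "Well_order r" and h1: "ord_less r a b" and h2: "(b,c) \<in> r" shows "ord_less r a c"
proof -
  from h1 have ab: "(a,b) \<in> r" and nab: "a \<noteq> b" by (simp_all add: ord_less_def)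
  have ac: "(a,c) \<in> r" by (rule wo_trans[OF wo ab h2])
  have "a \<noteq> c"
  proof
    assume "a = c"
    with h2 have "(b,a) \<in> r" by simp
    with ab have "a = b" by (rule wo_antisym[OF wo])
    with nab show False ..
  qed
  with ac show ?thesis by (simp add: ord_less_def)
qed

lemma le_lt_trans:
  assumes wo: "Well_order r" and h1: "(a,b) \<in> r" and h2: "ord_less r b c" shows "ord_less r a c"
proof -
  from h2 have bc: "(b,c) \<in> r" and nbc: "b \<noteq> c" by (simp_all add: ord_less_def)
  have ac: "(a,c) \<in> r" by (rule wo_trans[OF wo h1 bc])
  have "a \<noteq> c"
  proof
    assume "a = c"
    with h1 have "(c,b) \<in> r" by simp
    with bc have "b = c" by (rule wo_antisym[OF wo])
    with nbc show False ..
  qed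
  with ac show ?thesis by (simp add: ord_less_def)
qed

lemma lt_lt_trans:
  assumes wo: "Well_order r" and h1: "ord_less r a b" and h2: "ord_less r b c" shows "ord_less r a c"
  using lt_le_trans[OF wo h1] h2 by (simp add: ord_less_def)

lemma dir2:
  assumes wo: "Well_order r"
    and nomax: "\<forall>a\<in>Field r. \<exists>b\<in>Field r. ord_less r a b"
    and idl: "is_ideal_on r I"
    and part: "is_partition_of r C"
    and bas: "is_basis I ((\<lambda>a. \<Union>b\<in>{b \<in> Field r. (b, a) \<in> r}. C b) ` Field r)"
  shows "approximation_property r I"
proof -
  define D where "D = (\<lambda>a. \<Union>b\<in>{b \<in> Field r. (b, a) \<in> r}. C b)"
  define B where "B = (\<lambda>a. \<Union>b\<in>{b \<in> Field r. ord_less r b a}. C b)"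
  note an = wo_antisym[OF wo]
  have down: "\<And>X Y. X \<in> I \<Longrightarrow> Y \<subseteq> X \<Longrightarrow> Y \<in> I" using idl unfolding is_ideal_on_def by blast
  have DI: "\<And>a. a \<in> Field r \<Longrightarrow> D a \<in> I" using bas unfolding is_basis_def D_def by blast
  have Dcov: "\<And>X. X \<in> I \<Longrightarrow> \<exists>a\<in>Field r. X \<subseteq> D a" using bas unfolding is_basis_def D_def by blast
  have Cne: "\<And>a. a \<in> Field r \<Longrightarrow> C a \<noteq> {}" using part unfolding is_partition_of_def by blast
  have Cdis: "\<And>a b. a \<in> Field r \<Longrightarrow> b \<in> Field r \<Longrightarrow> a \<noteq> b \<Longrightarrow> C a \<inter> C b = {}"
    using part unfolding is_partition_of_def by blast
  have BD: "\<And>a. B a \<subseteq> D a" unfolding B_def D_def ord_less_def by blast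
  have strict: "\<And>a b. a\<in>Field r \<Longrightarrow> b\<in>Field r \<Longrightarrow> ord_less r a b \<Longrightarrow> B a \<subset> B b"
  proof -
    fix a b assume a: "a\<in>Field r" and b: "b\<in>Field r" and ab: "ord_less r a b"
    have sub: "B a \<subseteq> B b"
    proof
      fix x assume "x \<in> B a"
      then obtain c where c: "c \<in> Field r" "ord_less r c a" "x \<in> C c" unfolding B_def by blast
      have "ord_less r c b" using lt_lt_trans[OF wo c(2) ab] .
      then show "x \<in> B b" using c unfolding B_def by blast
    qed
    have "C a \<subseteq> B b" unfolding B_def using a ab by blast
    moreover have "C a \<inter> B a = {}"
      unfolding B_def using Cdis a unfolding ord_less_def by blast
    ultimately show "B a \<subset> B b" using sub Cne[OF a] by blast
  qed
  show ?thesis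
    unfolding approximation_property_def
  proof (intro exI[of _ B] conjI ballI allI impI)
    fix a assume "a \<in> Field r" then show "B a \<in> I" using BD DI down by blast
  next
    fix a b assume "a\<in>Field r" "b\<in>Field r" "ord_less r a b" then show "B a \<subset> B b" using strict by blast
  next
    fix a assume lim: "is_limit r a"
    show "B a = (\<Union>b\<in>{b. ord_less r b a}. B b)"
    proof
      show "B a \<subseteq> (\<Union>b\<in>{b. ord_less r b a}. B b)"
      proof
        fix x assume "x \<in> B a"
        then obtain c where c: "c\<in>Field r" "ord_less r c a" "x \<in> C c" unfolding B_def by blast
        then obtain d where d: "ord_less r c d" "ord_less r d a" using lim unfolding is_limit_def by blast
        then have "x \<in> B d" unfolding B_def using c by blast
        then show "x \<in> (\<Union>b\<in>{b. ord_less r b a}. B b)" using d by blast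
      qed
    next
      show "(\<Union>b\<in>{b. ord_less r b a}. B b) \<subseteq> B a"
      proof
        fix x assume "x \<in> (\<Union>b\<in>{b. ord_less r b a}. B b)"
        then obtain b c where b: "ord_less r b a" and c: "c \<in> Field r" "ord_less r c b" "x \<in> C c"
          unfolding B_def by blast
        have "ord_less r c a" using lt_lt_trans[OF wo c(2) b] .
        then show "x \<in> B a" using c unfolding B_def by blast
      qed
    qed
  next
    fix a assume a: "a \<in> Field r" and h: "\<forall>b\<in>Field r. (a, b) \<in> r"
    have nl: "\<not> ord_less r b a" if bF: "b \<in> Field r" for b
    proof
      assume "ord_less r b a"
      then have "(b,a) \<in> r" "b \<noteq> a" unfolding ord_less_def by auto
      moreover have "(a,b) \<in> r" using h bF by blast
      ultimately show False using an by metis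
    qed
    show "B a = {}" unfolding B_def using nl by blast
  next
    fix X assume "X \<in> I"
    then obtain \<alpha> where al: "\<alpha> \<in> Field r" "X \<subseteq> D \<alpha>" using Dcov by blast
    obtain s where s: "s \<in> Field r" "ord_less r \<alpha> s" using nomax al by blast
    obtain s' where s': "s' \<in> Field r" "ord_less r s s'" using nomax s by blast
    have "D \<alpha> \<subseteq> B s"
    proof
      fix x assume "x \<in> D \<alpha>"
      then obtain c where c: "c \<in> Field r" "(c, \<alpha>) \<in> r" "x \<in> C c" unfolding D_def by blast
      have "ord_less r c s" using le_lt_trans[OF wo c(2) s(2)] .
      then show "x \<in> B s" using c unfolding B_def by blast
    qed
    moreover have "B s \<subset> B s'" using strict s s' by blast
    ultimately show "\<exists>a\<in>Field r. X \<subset> B a" using al s' by blast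
  qed
qed

lemma dir1:
  assumes wo: "Well_order r"
    and nomax: "\<forall>a\<in>Field r. \<exists>b\<in>Field r. ord_less r a b"
    and idl: "is_ideal_on r I"
    and bnd: "\<forall>B. bounded_subset r B \<longrightarrow> B \<in> I"
    and ap: "approximation_property r I"
  shows "\<exists>C :: 'a \<Rightarrow> 'a set. is_partition_of r C \<and>
       is_basis I ((\<lambda>a. \<Union>b\<in>{b \<in> Field r. (b, a) \<in> r}. C b) ` Field r)"
proof -
  note an = wo_antisym[OF wo] and tot = wo_total[OF wo]
    and lst = wo_least[OF wo]
  obtain B :: "'a \<Rightarrow> 'a set" where
    BI: "\<forall>a\<in>Field r. B a \<in> I" and
    Bs: "\<forall>a\<in>Field r. \<forall>b\<in>Field r. ord_less r a b \<longrightarrow> B a \<subset> B b" and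
    Bl: "\<forall>a. is_limit r a \<longrightarrow> B a = (\<Union>b\<in>{b. ord_less r b a}. B b)" and
    B0: "\<forall>a\<in>Field r. (\<forall>b\<in>Field r. (a, b) \<in> r) \<longrightarrow> B a = {}" and
    Bc: "\<forall>X\<in>I. \<exists>a\<in>Field r. X \<subset> B a"
    using ap unfolding approximation_property_def by (elim exE conjE) (rule that)
  have down: "\<And>X Y. X \<in> I \<Longrightarrow> Y \<subseteq> X \<Longrightarrow> Y \<in> I" using idl unfolding is_ideal_on_def by blast
  have IP: "\<And>X. X \<in> I \<Longrightarrow> X \<subseteq> Field r" using idl unfolding is_ideal_on_def by blast
  have mono: "\<And>a b. a\<in>Field r \<Longrightarrow> b\<in>Field r \<Longrightarrow> (a,b)\<in>r \<Longrightarrow> B a \<subseteq> B b"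
    using Bs unfolding ord_less_def by blast
  define C where "C = (\<lambda>a. {x\<in>Field r. x \<notin> B a \<and> (\<forall>b\<in>Field r. ord_less r a b \<longrightarrow> x \<in> B b)})"
  have K: "\<And>a x. a \<in> Field r \<Longrightarrow> x \<in> B a \<Longrightarrow> \<exists>\<delta>\<in>Field r. ord_less r \<delta> a \<and> x \<in> C \<delta>"
  proof -
    fix a x assume a: "a \<in> Field r" and xa: "x \<in> B a"
    have xF: "x \<in> Field r" using IP BI a xa by blast
    define S where "S = {g\<in>Field r. x \<in> B g}"
    obtain \<gamma> where g: "\<gamma> \<in> S" and gl: "\<forall>y\<in>S. (\<gamma>,y)\<in>r"
      using lst[of S a] a xa unfolding S_def by blast
    have gF: "\<gamma> \<in> Field r" and xg: "x \<in> B \<gamma>" using g unfolding S_def by auto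
    have ga: "(\<gamma>, a) \<in> r" using gl a xa unfolding S_def by blast
    have "\<not> (\<forall>b\<in>Field r. (\<gamma>, b) \<in> r)" using B0 gF xg by blast
    then obtain b0 where b0: "b0 \<in> Field r" "(\<gamma>, b0) \<notin> r" by blast
    then have ex: "\<exists>b. ord_less r b \<gamma>" using tot[OF gF b0(1)] unfolding ord_less_def by blast
    have nl: "\<not> is_limit r \<gamma>"
    proof
      assume "is_limit r \<gamma>"
      then have "x \<in> (\<Union>b\<in>{b. ord_less r b \<gamma>}. B b)" using Bl xg by blast
      then obtain b where b: "ord_less r b \<gamma>" "x \<in> B b" by blast
      then have "b \<in> Field r" unfolding ord_less_def by (blast intro: FieldI1)
      then have "(\<gamma>, b) \<in> r" using gl b unfolding S_def by blast
      moreover have "(b, \<gamma>) \<in> r" "b \<noteq> \<gamma>" using b(1) unfolding ord_less_def by auto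
      ultimately show False using an by metis
    qed
    then obtain \<delta> where d: "ord_less r \<delta> \<gamma>" and nc: "\<not> (\<exists>c. ord_less r \<delta> c \<and> ord_less r c \<gamma>)"
      using gF ex unfolding is_limit_def by blast
    have dF: "\<delta> \<in> Field r" using d unfolding ord_less_def by (blast intro: FieldI1)
    have "x \<notin> B \<delta>"
    proof
      assume "x \<in> B \<delta>"
      then have "(\<gamma>, \<delta>) \<in> r" using gl dF unfolding S_def by blast
      moreover have "(\<delta>, \<gamma>) \<in> r" "\<delta> \<noteq> \<gamma>" using d unfolding ord_less_def by auto
      ultimately show False using an by metis
    qed
    moreover have "\<forall>b\<in>Field r. ord_less r \<delta> b \<longrightarrow> x \<in> B b"
    proof (intro ballI impI)
      fix b assume bF: "b \<in> Field r" and db: "ord_less r \<delta> b"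
      have "(\<gamma>, b) \<in> r"
      proof (rule ccontr)
        assume "(\<gamma>, b) \<notin> r"
        then have "(b, \<gamma>) \<in> r" "b \<noteq> \<gamma>" using tot[OF gF bF] by auto
        then have "ord_less r b \<gamma>" unfolding ord_less_def by blast
        then show False using nc db by blast
      qed
      then show "x \<in> B b" using mono[OF gF bF] xg by blast
    qed
    moreover have "ord_less r \<delta> a" using lt_le_trans[OF wo d ga] .
    ultimately show "\<exists>\<delta>\<in>Field r. ord_less r \<delta> a \<and> x \<in> C \<delta>" using dF xF unfolding C_def by blast
  qed
  have succ: "\<And>a. a \<in> Field r \<Longrightarrow> \<exists>s\<in>Field r. ord_less r a s \<and> (\<forall>b\<in>Field r. ord_less r a b \<longrightarrow> (s,b)\<in>r)"
  proof -
    fix a assume a: "a \<in> Field r"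
    obtain b where "b \<in> Field r" "ord_less r a b" using nomax a by blast
    then obtain s where "s \<in> {b\<in>Field r. ord_less r a b}" "\<forall>y\<in>{b\<in>Field r. ord_less r a b}. (s,y)\<in>r"
      using lst[of "{b\<in>Field r. ord_less r a b}" b] by blast
    then show "\<exists>s\<in>Field r. ord_less r a s \<and> (\<forall>b\<in>Field r. ord_less r a b \<longrightarrow> (s,b)\<in>r)" by blast
  qed
  have part: "is_partition_of r C"
    unfolding is_partition_of_def
  proof (intro conjI ballI impI)
    fix a assume a: "a \<in> Field r"
    obtain s where s: "s\<in>Field r" "ord_less r a s" "\<forall>b\<in>Field r. ord_less r a b \<longrightarrow> (s,b)\<in>r"
      using succ a by blast
    have "B a \<subset> B s" using Bs a s by blast
    then obtain x where x: "x \<in> B s" "x \<notin> B a" by blast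
    have "x \<in> Field r" using IP BI s x by blast
    moreover have "\<forall>b\<in>Field r. ord_less r a b \<longrightarrow> x \<in> B b" using s mono x by blast
    ultimately have "x \<in> C a" using x unfolding C_def by blast
    then show "C a \<noteq> {}" by blast
  next
    fix a assume "a \<in> Field r" then show "C a \<subseteq> Field r" unfolding C_def by blast
  next
    fix a b assume a: "a \<in> Field r" and b: "b \<in> Field r" and ab: "a \<noteq> b"
    have "ord_less r a b \<or> ord_less r b a" using tot[OF a b] ab unfolding ord_less_def by blast
    then show "C a \<inter> C b = {}"
    proof
      assume "ord_less r a b" then show ?thesis using b unfolding C_def by blast
    next
      assume "ord_less r b a" then show ?thesis using a unfolding C_def by blast
    qed
  next
    show "(\<Union>a\<in>Field r. C a) = Field r"
    proof
      show "(\<Union>a\<in>Field r. C a) \<subseteq> Field r" unfolding C_def by blast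
    next
      show "Field r \<subseteq> (\<Union>a\<in>Field r. C a)"
      proof
        fix x assume x: "x \<in> Field r"
        have "bounded_subset r {x}" unfolding bounded_subset_def using x nomax by blast
        then have "{x} \<in> I" using bnd by blast
        then obtain a where "a \<in> Field r" "{x} \<subset> B a" using Bc by blast
        then show "x \<in> (\<Union>a\<in>Field r. C a)" using K by blast
      qed
    qed
  qed
  have bas: "is_basis I ((\<lambda>a. \<Union>b\<in>{b \<in> Field r. (b, a) \<in> r}. C b) ` Field r)"
    unfolding is_basis_def
  proof (intro conjI ballI subsetI)
    fix D assume "D \<in> (\<lambda>a. \<Union>b\<in>{b \<in> Field r. (b, a) \<in> r}. C b) ` Field r"
    then obtain a where a: "a \<in> Field r" and D: "D = (\<Union>b\<in>{b \<in> Field r. (b, a) \<in> r}. C b)" by blast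
    obtain s where s: "s \<in> Field r" "ord_less r a s" using nomax a by blast
    have "D \<subseteq> B s"
    proof
      fix x assume "x \<in> D"
      then obtain b where b: "b \<in> Field r" "(b,a)\<in>r" "x \<in> C b" using D by blast
      then have "ord_less r b s" using le_lt_trans[OF wo _ s(2)] by blast
      then show "x \<in> B s" using b s unfolding C_def by blast
    qed
    then show "D \<in> I" using down BI s by blast
  next
    fix X assume "X \<in> I"
    then obtain a where a: "a \<in> Field r" "X \<subset> B a" using Bc by blast
    have "X \<subseteq> (\<Union>b\<in>{b \<in> Field r. (b, a) \<in> r}. C b)"
    proof
      fix x assume "x \<in> X"
      then have "x \<in> B a" using a by blast
      then obtain d where "d \<in> Field r" "ord_less r d a" "x \<in> C d" using K a by blast
      then show "x \<in> (\<Union>b\<in>{b \<in> Field r. (b, a) \<in> r}. C b)" unfolding ord_less_def by blast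
    qed
    then show "\<exists>B\<in>(\<lambda>a. \<Union>b\<in>{b \<in> Field r. (b, a) \<in> r}. C b) ` Field r. X \<subseteq> B" using a by blast
  qed
  show ?thesis using part bas by blast
qed

theorem lemma2p2:
  fixes r :: "'a rel" and I :: "'a set set"
  assumes "Card_order r"
    and "\<not> countable (Field r)"
    and "regularCard r"
    and "proper_ideal_on r I"
    and "kappa_complete r I"
    and "\<forall>B. bounded_subset r B \<longrightarrow> B \<in> I"
  shows "approximation_property r I \<longleftrightarrow>
    (\<exists>C :: 'a \<Rightarrow> 'a set. is_partition_of r C \<and>
       is_basis I ((\<lambda>a. \<Union>b\<in>{b \<in> Field r. (b, a) \<in> r}. C b) ` Field r))"
proof -
  have wo: "Well_order r" using assms(1) by (simp add: card_order_on_def)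
  have inf: "\<not> finite (Field r)" using assms(2) countable_finite by blast
  have nomax: "\<forall>a\<in>Field r. \<exists>b\<in>Field r. ord_less r a b"
  proof
    fix a assume "a \<in> Field r"
    then obtain b where "b \<in> Field r" "a \<noteq> b" "(a,b) \<in> r" using infinite_Card_order_limit[OF assms(1) inf] by blast
    then show "\<exists>b\<in>Field r. ord_less r a b" unfolding ord_less_def by blast
  qed
  have idl: "is_ideal_on r I" using assms(4) unfolding proper_ideal_on_def by blast
  show ?thesis
    using dir1[OF wo nomax idl assms(6)] dir2[OF wo nomax idl] by blast
qed

end
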